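(* Let $\tau>0$ and suppose that $\mathcal{K}^{\mathrm{sim}}_\tau(\mathcal{L})$ is nonempty. Consider GPC-Simplex run on $\mathcal{L}$ with input $(A,B,\tau,H,\mathcal{I},T)$. For each $t\in[T]$, the loss function $\ell_t(p,M^{[1:H]})=c_t(x_t(p,M^{[1:H]}),u_t(p,M^{[1:H]}))$ is $O(L\tau^2)$-Lipschitz with respect to the norm $\|\cdot\|_{d,H}$ on $\mathcal{X}$.
   Context: Notation. $\Delta^d$ is the probability simplex; $\Delta^d_\alpha:=\alpha\Delta^d$. $\mathbb{S}^d$: $d\times d$ column-stochastic matrices; $\mathbb{S}^d_a:=\{aM:M\in\mathbb{S}^d\}$; $\mathbb{S}^d_{[a,b]}:=\bigcup_{a'\in[a,b]}\mathbb{S}^d_{a'}$. $\|M\|_{1\to1}:=\sup_{\|x\|_1=1}\|Mx\|_1$; $M_{\cdot,j}$ is the $j$-th column. Norm: $\|(p,M^{[1:H]})\|_{d,H}^2:=\|p\|_1^2+\sum_{h=1}^H\sum_{j=1}^d\|M^{[h]}_{\cdot,j}\|_1^2$. $O(\cdot)$ hides a universal constant. Setting. $\mathcal{L}=(A,B,\mathcal{I},x_1,(\gamma_t),(w_t),(c_t))$ is a simplex LDS on $\Delta^d$: $A,B\in\mathbb{S}^d$, $\mathcal{I}=\bigcup_{\alpha\in[\alpha_{\mathrm{lb}},\alpha_{\mathrm{ub}}]}\Delta^d_\alpha$ with $0\le\alpha_{\mathrm{lb}}\le\alpha_{\mathrm{ub}}\le1$, $x_1\in\Delta^d$, $\gamma_t\in[0,1]$,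 $w_t\in\Delta^d$, and given $x_t$, $u_t\in\mathcal{I}$: $x_{t+1}=(1-\gamma_t)[(1-\|u_t\|_1)Ax_t+Bu_t]+\gamma_tw_t$, with cost $c_t(x_t,u_t)$. Each $c_t:\Delta^d\times\mathcal{I}\to\mathbb{R}$ is convex with $|c_t(x,u)-c_t(x',u')|\le L(\|x-x'\|_1+\|u-u'\|_1)$. Mixing: for $X\in\mathbb{S}^d$ with unique stationary distribution $\pi$, $D_X(t):=\sup_{p\in\Delta^d}\|X^tp-\pi\|_1$, $t_{\mathrm{mix}}(X):=\min\{t:D_X(t)\le1/4\}$ ($\infty$ if no unique stationary distribution). $C(K):=(1-\|K\|_{1\to1})A+BK$. $\mathcal{K}^{\mathrm{sim}}_\tau(\mathcal{L})$ is the set of policies $x\mapsto Kx$ with $K\in\mathbb{S}^d_{[\alpha_{\mathrm{lb}},\alpha_{\mathrm{ub}}]}$ and $t_{\mathrm{mix}}(C(K))\le\tau$. Algorithm GPC-Simplex (relevant parts). $\tau_A:=t_{\mathrm{mix}}(A)$, $a_0:=\max\{\alpha_{\mathrm{lb}},\min\{\alpha_{\mathrm{ub}},\mathbf{1}\{\tau_A>4\tau\}/(96\tau)\}\}$, domain $\mathcal{X}:=\bigcup_{a\in[a_0,\alpha_{\mathrm{ub}}]}\Delta^d_a\times(\mathbb{S}^d_a)^H$. Conventions $w_0:=x_1$, $\gamma_0:=1$, $w_t:=0$ for $t<0$; weights $\lambda_{t,i}:=\gamma_{t-i}\prod_{j=1}^{i-1}(1-\gamma_{t-j})$ ($i\ge1$),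 $\lambda_{t,0}:=1-\sum_{i=1}^H\lambda_{t,i}$. The algorithm computes the perturbations $w_t$ from observations, and $\ell_t(p,M^{[1:H]}):=c_t(x_t(p,M^{[1:H]}),u_t(p,M^{[1:H]}))$, where $x_1(p,M^{[1:H]}):=x_1$ and for $s\ge1$: $u_s(p,M^{[1:H]}):=\lambda_{s,0}p+\sum_{j=1}^H\lambda_{s,j}M^{[j]}w_{s-j}$, $x_{s+1}(p,M^{[1:H]}):=(1-\gamma_s)[(1-\|u_s(p,M^{[1:H]})\|_1)Ax_s(p,M^{[1:H]})+Bu_s(p,M^{[1:H]})]+\gamma_sw_s$. *)

theory Defs
  imports Complex_Main "HOL-Library.Extended_Nat"
begin

text \<open>Vectors in R^d are functions nat => real (coordinates i < d); d x d matrices are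
  functions nat => nat => real (entries (i,j) with i,j < d). Objects living in the
  simplex / stochastic matrices are required to vanish outside the index range.\<close>

definition norm1 :: "nat \<Rightarrow> (nat \<Rightarrow> real) \<Rightarrow> real" where
  "norm1 d x = (\<Sum>i<d. \<bar>x i\<bar>)"

definition simplex :: "nat \<Rightarrow> (nat \<Rightarrow> real) set" where
  "simplex d = {p. (\<forall>i. 0 \<le> p i) \<and> (\<forall>i\<ge>d. p i = 0) \<and> (\<Sum>i<d. p i) = 1}"

definition simplex_sc :: "nat \<Rightarrow> real \<Rightarrow> (nat \<Rightarrow> real) set" where
  "simplex_sc d \<alpha> = {(\<lambda>i. \<alpha> * p i) | p. p \<in> simplex d}"

definition stoch :: "nat \<Rightarrow> (nat \<Rightarrow> nat \<Rightarrow> real) \<Rightarrow> bool" where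
  "stoch d M \<longleftrightarrow> (\<forall>i j. 0 \<le> M i j) \<and> (\<forall>i j. (d \<le> i \<or> d \<le> j) \<longrightarrow> M i j = 0)
     \<and> (\<forall>j<d. (\<Sum>i<d. M i j) = 1)"

definition stoch_sc :: "nat \<Rightarrow> real \<Rightarrow> (nat \<Rightarrow> nat \<Rightarrow> real) set" where
  "stoch_sc d a = {(\<lambda>i j. a * M i j) | M. stoch d M}"

definition mv :: "nat \<Rightarrow> (nat \<Rightarrow> nat \<Rightarrow> real) \<Rightarrow> (nat \<Rightarrow> real) \<Rightarrow> nat \<Rightarrow> real" where
  "mv d M x = (\<lambda>i. if i < d then (\<Sum>j<d. M i j * x j) else 0)"

definition mmul :: "nat \<Rightarrow> (nat \<Rightarrow> nat \<Rightarrow> real) \<Rightarrow> (nat \<Rightarrow> nat \<Rightarrow> real) \<Rightarrow> nat \<Rightarrow> nat \<Rightarrow> real" where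
  "mmul d M N = (\<lambda>i j. if i < d \<and> j < d then (\<Sum>k<d. M i k * N k j) else 0)"

primrec mpow :: "nat \<Rightarrow> (nat \<Rightarrow> nat \<Rightarrow> real) \<Rightarrow> nat \<Rightarrow> nat \<Rightarrow> nat \<Rightarrow> real" where
  "mpow d X 0 = (\<lambda>i j. if i = j \<and> i < d then 1 else 0)"
| "mpow d X (Suc n) = mmul d X (mpow d X n)"

definition opnorm11 :: "nat \<Rightarrow> (nat \<Rightarrow> nat \<Rightarrow> real) \<Rightarrow> real" where
  "opnorm11 d M = Sup {norm1 d (mv d M x) | x. norm1 d x = 1}"

definition stationary :: "nat \<Rightarrow> (nat \<Rightarrow> nat \<Rightarrow> real) \<Rightarrow> (nat \<Rightarrow> real) \<Rightarrow> bool" where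
  "stationary d X \<pi> \<longleftrightarrow> \<pi> \<in> simplex d \<and> mv d X \<pi> = \<pi>"

definition Dmix :: "nat \<Rightarrow> (nat \<Rightarrow> nat \<Rightarrow> real) \<Rightarrow> (nat \<Rightarrow> real) \<Rightarrow> nat \<Rightarrow> real" where
  "Dmix d X \<pi> t = (SUP p\<in>simplex d. norm1 d (\<lambda>i. mv d (mpow d X t) p i - \<pi> i))"

definition tmix :: "nat \<Rightarrow> (nat \<Rightarrow> nat \<Rightarrow> real) \<Rightarrow> enat" where
  "tmix d X = (if \<exists>!\<pi>. stationary d X \<pi> then
      (let \<pi> = (THE \<pi>. stationary d X \<pi>) in
        if \<exists>t. Dmix d X \<pi> t \<le> 1/4 then enat (LEAST t. Dmix d X \<pi> t \<le> 1/4) else \<infinity>)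
    else \<infinity>)"

definition Cmat :: "nat \<Rightarrow> (nat \<Rightarrow> nat \<Rightarrow> real) \<Rightarrow> (nat \<Rightarrow> nat \<Rightarrow> real) \<Rightarrow> (nat \<Rightarrow> nat \<Rightarrow> real)
    \<Rightarrow> nat \<Rightarrow> nat \<Rightarrow> real" where
  "Cmat d A B K = (\<lambda>i j. (1 - opnorm11 d K) * A i j + mmul d B K i j)"

definition Ksim :: "nat \<Rightarrow> (nat \<Rightarrow> nat \<Rightarrow> real) \<Rightarrow> (nat \<Rightarrow> nat \<Rightarrow> real) \<Rightarrow> real \<Rightarrow> real \<Rightarrow> nat
    \<Rightarrow> (nat \<Rightarrow> nat \<Rightarrow> real) set" where
  "Ksim d A B alb aub \<tau> = {K. (\<exists>a\<in>{alb..aub}. K \<in> stoch_sc d a) \<and> tmix d (Cmat d A B K) \<le> enat \<tau>}"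

definition Iset :: "nat \<Rightarrow> real \<Rightarrow> real \<Rightarrow> (nat \<Rightarrow> real) set" where
  "Iset d alb aub = (\<Union>\<alpha>\<in>{alb..aub}. simplex_sc d \<alpha>)"

definition a0 :: "nat \<Rightarrow> (nat \<Rightarrow> nat \<Rightarrow> real) \<Rightarrow> nat \<Rightarrow> real \<Rightarrow> real \<Rightarrow> real" where
  "a0 d A \<tau> alb aub = max alb (min aub
      ((if tmix d A > enat (4 * \<tau>) then 1 else 0) / (96 * real \<tau>)))"

definition domX :: "nat \<Rightarrow> nat \<Rightarrow> real \<Rightarrow> real
    \<Rightarrow> ((nat \<Rightarrow> real) \<times> (nat \<Rightarrow> nat \<Rightarrow> nat \<Rightarrow> real)) set" where
  "domX d H alo aub = {(p, M). \<exists>a\<in>{alo..aub}. p \<in> simplex_sc d a \<and> (\<forall>h\<in>{1..H}. M h \<in> stoch_sc d a)}"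

definition normdH :: "nat \<Rightarrow> nat \<Rightarrow> (nat \<Rightarrow> real) \<Rightarrow> (nat \<Rightarrow> nat \<Rightarrow> nat \<Rightarrow> real) \<Rightarrow> real" where
  "normdH d H p M = sqrt ((norm1 d p)\<^sup>2 + (\<Sum>h\<in>{1..H}. \<Sum>j<d. (\<Sum>i<d. \<bar>M h i j\<bar>)\<^sup>2))"

text \<open>Conventions w_0 = x_1, gamma_0 = 1, w_t = 0 for t < 0 (gamma_t for t<0 is irrelevant; set to 0).\<close>
definition wext :: "(nat \<Rightarrow> real) \<Rightarrow> (nat \<Rightarrow> nat \<Rightarrow> real) \<Rightarrow> int \<Rightarrow> nat \<Rightarrow> real" where
  "wext x1 w k = (if k < 0 then (\<lambda>_. 0) else if k = 0 then x1 else w (nat k))"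

definition gext :: "(nat \<Rightarrow> real) \<Rightarrow> int \<Rightarrow> real" where
  "gext \<gamma> k = (if k < 0 then 0 else if k = 0 then 1 else \<gamma> (nat k))"

definition lamw :: "(nat \<Rightarrow> real) \<Rightarrow> nat \<Rightarrow> nat \<Rightarrow> real" where
  "lamw \<gamma> t i = gext \<gamma> (int t - int i) * (\<Prod>j\<in>{1..<i}. (1 - gext \<gamma> (int t - int j)))"

definition lam0 :: "(nat \<Rightarrow> real) \<Rightarrow> nat \<Rightarrow> nat \<Rightarrow> real" where
  "lam0 \<gamma> H t = 1 - (\<Sum>i\<in>{1..H}. lamw \<gamma> t i)"

definition uc :: "nat \<Rightarrow> nat \<Rightarrow> (nat \<Rightarrow> real) \<Rightarrow> (nat \<Rightarrow> real) \<Rightarrow> (nat \<Rightarrow> nat \<Rightarrow> real)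
    \<Rightarrow> (nat \<Rightarrow> real) \<Rightarrow> (nat \<Rightarrow> nat \<Rightarrow> nat \<Rightarrow> real) \<Rightarrow> nat \<Rightarrow> nat \<Rightarrow> real" where
  "uc d H \<gamma> x1 w p M s = (\<lambda>k. lam0 \<gamma> H s * p k
      + (\<Sum>j\<in>{1..H}. lamw \<gamma> s j * mv d (M j) (wext x1 w (int s - int j)) k))"

text \<open>xtraj ... n = x_{n+1}(p, M^{[1:H]}).\<close>
primrec xtraj :: "nat \<Rightarrow> nat \<Rightarrow> (nat \<Rightarrow> nat \<Rightarrow> real) \<Rightarrow> (nat \<Rightarrow> nat \<Rightarrow> real) \<Rightarrow> (nat \<Rightarrow> real)
    \<Rightarrow> (nat \<Rightarrow> real) \<Rightarrow> (nat \<Rightarrow> nat \<Rightarrow> real) \<Rightarrow> (nat \<Rightarrow> real) \<Rightarrow> (nat \<Rightarrow> nat \<Rightarrow> nat \<Rightarrow> real)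
    \<Rightarrow> nat \<Rightarrow> nat \<Rightarrow> real" where
  "xtraj d H A B \<gamma> x1 w p M 0 = x1"
| "xtraj d H A B \<gamma> x1 w p M (Suc n) =
     (let s = Suc n; u = uc d H \<gamma> x1 w p M s; x = xtraj d H A B \<gamma> x1 w p M n in
       (\<lambda>k. (1 - \<gamma> s) * ((1 - norm1 d u) * mv d A x k + mv d B u k) + \<gamma> s * w s k))"

definition loss :: "nat \<Rightarrow> nat \<Rightarrow> (nat \<Rightarrow> nat \<Rightarrow> real) \<Rightarrow> (nat \<Rightarrow> nat \<Rightarrow> real) \<Rightarrow> (nat \<Rightarrow> real)
    \<Rightarrow> (nat \<Rightarrow> real) \<Rightarrow> (nat \<Rightarrow> nat \<Rightarrow> real) \<Rightarrow> (nat \<Rightarrow> (nat \<Rightarrow> real) \<Rightarrow> (nat \<Rightarrow> real) \<Rightarrow> real)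
    \<Rightarrow> nat \<Rightarrow> (nat \<Rightarrow> real) \<Rightarrow> (nat \<Rightarrow> nat \<Rightarrow> nat \<Rightarrow> real) \<Rightarrow> real" where
  "loss d H A B \<gamma> x1 w c t p M =
     c t (xtraj d H A B \<gamma> x1 w p M (t - 1)) (uc d H \<gamma> x1 w p M t)"

end

theory Submission
  imports Defs
begin


lemma norm1_nonneg: "0 \<le> norm1 d v"
  unfolding norm1_def by (simp add: sum_nonneg)

lemma norm1_cong: "(\<And>i. i < d \<Longrightarrow> v i = w i) \<Longrightarrow> norm1 d v = norm1 d w"
  unfolding norm1_def by (rule sum.cong) auto

lemma norm1_lin: "norm1 d (\<lambda>i. a * v i + b * w i) \<le> \<bar>a\<bar> * norm1 d v + \<bar>b\<bar> * norm1 d w"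
proof -
  have "norm1 d (\<lambda>i. a * v i + b * w i) \<le> (\<Sum>i<d. \<bar>a\<bar> * \<bar>v i\<bar> + \<bar>b\<bar> * \<bar>w i\<bar>)"
    unfolding norm1_def by (rule sum_mono) (metis abs_mult abs_triangle_ineq)
  also have "\<dots> = \<bar>a\<bar> * norm1 d v + \<bar>b\<bar> * norm1 d w"
    unfolding norm1_def by (simp add: sum.distrib sum_distrib_left)
  finally show ?thesis .
qed

lemma norm1_add: "norm1 d (\<lambda>i. v i + w i) \<le> norm1 d v + norm1 d w"
  using norm1_lin[of d 1 v 1 w] by simp

lemma norm1_diff: "norm1 d (\<lambda>i. v i - w i) \<le> norm1 d v + norm1 d w"
  using norm1_lin[of d 1 v "-1" w] by simp

lemma norm1_scale: "norm1 d (\<lambda>i. a * v i) = \<bar>a\<bar> * norm1 d v"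
  unfolding norm1_def by (simp add: abs_mult sum_distrib_left)

lemma mv_cong: "(\<And>j. j < d \<Longrightarrow> v j = w j) \<Longrightarrow> mv d X v = mv d X w"
  unfolding mv_def by (rule ext) (auto intro!: sum.cong)

lemma mv_lin: "mv d X (\<lambda>i. a * v i + b * w i) = (\<lambda>i. a * mv d X v i + b * mv d X w i)"
  unfolding mv_def by (rule ext) (simp add: algebra_simps sum.distrib sum_distrib_left)

lemma mv_diff: "mv d X (\<lambda>i. v i - w i) = (\<lambda>i. mv d X v i - mv d X w i)"
  using mv_lin[of d X 1 v "-1" w] by simp

lemma mv_matdiff: "mv d (\<lambda>i j. X i j - Y i j) v = (\<lambda>i. mv d X v i - mv d Y v i)"
  unfolding mv_def by (rule ext) (simp add: algebra_simps sum_subtractf)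

lemma mv_mmul: "mv d (mmul d X Y) v = mv d X (mv d Y v)"
proof (rule ext)
  fix i show "mv d (mmul d X Y) v i = mv d X (mv d Y v) i"
  proof (cases "i < d")
    case True
    have "mv d (mmul d X Y) v i = (\<Sum>j<d. (\<Sum>k<d. X i k * Y k j) * v j)"
      using True by (auto simp: mv_def mmul_def intro!: sum.cong)
    also have "\<dots> = (\<Sum>j<d. \<Sum>k<d. X i k * Y k j * v j)" by (simp add: sum_distrib_right)
    also have "\<dots> = (\<Sum>k<d. \<Sum>j<d. X i k * Y k j * v j)" by (rule sum.swap)
    also have "\<dots> = (\<Sum>k<d. X i k * mv d Y v k)"
      by (auto simp: mv_def sum_distrib_left mult.assoc intro!: sum.cong)
    also have "\<dots> = mv d X (mv d Y v) i" using True by (simp add: mv_def)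
    finally show ?thesis .
  next
    case False thus ?thesis by (simp add: mv_def)
  qed
qed

lemma mv_vanish: "d \<le> i \<Longrightarrow> mv d X v i = 0"
  unfolding mv_def by simp

lemma mv_colbound:
  assumes "\<And>j. j < d \<Longrightarrow> (\<Sum>i<d. \<bar>X i j\<bar>) \<le> N"
  shows "norm1 d (mv d X v) \<le> N * norm1 d v"
proof -
  have "norm1 d (mv d X v) = (\<Sum>i<d. \<bar>\<Sum>j<d. X i j * v j\<bar>)"
    unfolding norm1_def mv_def by simp
  also have "\<dots> \<le> (\<Sum>i<d. \<Sum>j<d. \<bar>X i j\<bar> * \<bar>v j\<bar>)"
    by (rule sum_mono) (rule order_trans[OF sum_abs], simp add: abs_mult)
  also have "\<dots> = (\<Sum>j<d. (\<Sum>i<d. \<bar>X i j\<bar>) * \<bar>v j\<bar>)"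
    by (subst sum.swap) (simp add: sum_distrib_right)
  also have "\<dots> \<le> (\<Sum>j<d. N * \<bar>v j\<bar>)"
    by (rule sum_mono) (simp add: assms mult_right_mono)
  also have "\<dots> = N * norm1 d v" unfolding norm1_def by (simp add: sum_distrib_left)
  finally show ?thesis .
qed

lemma stoch_sc_D: "K \<in> stoch_sc d a \<Longrightarrow> \<exists>S. stoch d S \<and> K = (\<lambda>i j. a * S i j)"
  unfolding stoch_sc_def by auto

lemma stoch_sc_col: assumes "K \<in> stoch_sc d a" "0 \<le> a" "j < d"
  shows "(\<Sum>i<d. \<bar>K i j\<bar>) = a" "(\<Sum>i<d. K i j) = a" "\<And>i. 0 \<le> K i j"
proof -
  obtain S where S: "stoch d S" "K = (\<lambda>i j. a * S i j)" using stoch_sc_D[OF assms(1)] by blast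
  show "(\<Sum>i<d. K i j) = a" using S assms unfolding stoch_def by (simp add: sum_distrib_left[symmetric])
  moreover show "\<And>i. 0 \<le> K i j" using S assms unfolding stoch_def by simp
  ultimately show "(\<Sum>i<d. \<bar>K i j\<bar>) = a" by simp
qed

lemma stoch_sc1: "stoch d A \<Longrightarrow> A \<in> stoch_sc d 1"
  unfolding stoch_sc_def by auto

lemma mv_sc_norm: assumes "K \<in> stoch_sc d a" "0 \<le> a"
  shows "norm1 d (mv d K v) \<le> a * norm1 d v"
  by (rule mv_colbound) (simp add: stoch_sc_col[OF assms])

lemma mv_stoch_norm: assumes "stoch d A" shows "norm1 d (mv d A v) \<le> norm1 d v"
  using mv_sc_norm[OF stoch_sc1[OF assms], of v] by simp

lemma mv_sc_sum: assumes "K \<in> stoch_sc d a" "0 \<le> a"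
  shows "(\<Sum>i<d. mv d K v i) = a * (\<Sum>j<d. v j)"
proof -
  have "(\<Sum>i<d. mv d K v i) = (\<Sum>i<d. \<Sum>j<d. K i j * v j)" unfolding mv_def by simp
  also have "\<dots> = (\<Sum>j<d. (\<Sum>i<d. K i j) * v j)"
    by (subst sum.swap) (simp add: sum_distrib_right)
  also have "\<dots> = a * (\<Sum>j<d. v j)" by (simp add: stoch_sc_col[OF assms] sum_distrib_left)
  finally show ?thesis .
qed

lemma mv_sc_nonneg: assumes "K \<in> stoch_sc d a" "0 \<le> a" "\<And>j. 0 \<le> v j"
  shows "0 \<le> mv d K v i"
  unfolding mv_def using stoch_sc_col(3)[OF assms(1,2)] assms(3)
  by (auto intro!: sum_nonneg)


lemma Tk_cong: "(\<And>j. j < d \<Longrightarrow> v j = w j) \<Longrightarrow> i < d \<Longrightarrow> (mv d X ^^ k) v i = (mv d X ^^ k) w i"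
proof (induction k arbitrary: i)
  case 0 thus ?case by simp
next
  case (Suc k) thus ?case by (simp add: mv_cong[of d "(mv d X ^^ k) v" "(mv d X ^^ k) w"])
qed

lemma Tk_lin: "(mv d X ^^ k) (\<lambda>i. a * v i + b * w i) = (\<lambda>i. a * (mv d X ^^ k) v i + b * (mv d X ^^ k) w i)"
  by (induction k) (simp_all add: mv_lin)

lemma Tk_nonexp: assumes "\<And>w. norm1 d (mv d X w) \<le> norm1 d w"
  shows "norm1 d ((mv d X ^^ k) v) \<le> norm1 d v"
proof (induction k)
  case 0 thus ?case by simp
next
  case (Suc k) thus ?case using assms[of "(mv d X ^^ k) v"] by simp
qed

lemma mpow_eq: "i < d \<Longrightarrow> mv d (mpow d X t) v i = (mv d X ^^ t) v i"
proof (induction t arbitrary: i)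
  case 0
  have "mv d (mpow d X 0) v i = (\<Sum>j<d. (if i = j then 1 else 0) * v j)"
    using 0 by (auto simp: mv_def intro!: sum.cong)
  also have "\<dots> = (\<Sum>j<d. if i = j then v j else 0)" by (rule sum.cong) auto
  also have "\<dots> = v i" using 0 by simp
  finally show ?case by simp
next
  case (Suc t)
  have "mv d (mpow d X (Suc t)) v = mv d X (mv d (mpow d X t) v)" by (simp add: mv_mmul)
  also have "\<dots> = mv d X ((mv d X ^^ t) v)" by (rule mv_cong) (simp add: Suc.IH)
  finally show ?case by simp
qed

lemma simplex_norm1: "p \<in> simplex d \<Longrightarrow> norm1 d p = 1"
  unfolding simplex_def norm1_def by simp

lemma decomp:
  assumes lin: "\<And>a b v w. T (\<lambda>i. a * v i + b * w i) = (\<lambda>i. a * T v i + b * T w i)"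
    and cong: "\<And>v w i. (\<And>j. j < d \<Longrightarrow> v j = w j) \<Longrightarrow> i < d \<Longrightarrow> T v i = T w i"
    and bnd: "\<And>p. p \<in> simplex d \<Longrightarrow> norm1 d (\<lambda>i. T p i - \<pi> i) \<le> r"
    and zs: "(\<Sum>i<d. v i) = 0"
  shows "norm1 d (T v) \<le> r * norm1 d v"
proof -
  define s where "s = (\<Sum>i<d. max (v i) 0)"
  have vpm: "v i = max (v i) 0 - max (- v i) 0" for i by auto
  have s2: "(\<Sum>i<d. max (- v i) 0) = s"
  proof -
    have "(\<Sum>i<d. v i) = s - (\<Sum>i<d. max (- v i) 0)"
      unfolding s_def by (subst sum_subtractf[symmetric]) (rule sum.cong, auto)
    thus ?thesis using zs by simp
  qed
  have nv: "norm1 d v = 2 * s"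
  proof -
    have "norm1 d v = (\<Sum>i<d. max (v i) 0 + max (- v i) 0)"
      unfolding norm1_def by (rule sum.cong) auto
    thus ?thesis using s2 by (simp add: sum.distrib s_def)
  qed
  have s0: "0 \<le> s" unfolding s_def by (simp add: sum_nonneg)
  show ?thesis
  proof (cases "s = 0")
    case True
    have "\<forall>i<d. v i = 0"
    proof (intro allI impI)
      fix i assume "i < d"
      have m1: "max (v i) 0 = 0" using True unfolding s_def
        by (subst (asm) sum_nonneg_eq_0_iff) (use \<open>i<d\<close> in auto)
      have z2: "(\<Sum>i<d. max (- v i) 0) = 0" using True s2 by simp
      have m2: "max (- v i) 0 = 0" using z2
        by (subst (asm) sum_nonneg_eq_0_iff) (use \<open>i<d\<close> in auto)
      show "v i = 0" using m1 m2 by linarith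
    qed
    hence "norm1 d (T v) = norm1 d (T (\<lambda>i. 0 * v i + 0 * v i))"
      by (intro norm1_cong cong) auto
    also have "\<dots> = 0" using lin[of 0 v 0 v] by (simp add: norm1_def)
    finally show ?thesis using nv True by simp
  next
    case False
    hence sp: "0 < s" using s0 by simp
    define p where "p = (\<lambda>i. if i < d then max (v i) 0 / s else 0)"
    define q where "q = (\<lambda>i. if i < d then max (- v i) 0 / s else 0)"
    have "p \<in> simplex d" unfolding simplex_def p_def
      using sp by (auto simp: sum_divide_distrib[symmetric] s_def)
    have "q \<in> simplex d" unfolding simplex_def q_def
      using sp s2 by (auto simp: sum_divide_distrib[symmetric])
    have "norm1 d (T v) = norm1 d (T (\<lambda>i. s * p i + (- s) * q i))"
    proof (intro norm1_cong cong)
      fix j assume "j < d"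
      thus "v j = s * p j + - s * q j" using sp unfolding p_def q_def
        by (auto simp: max_def)
    qed
    also have "\<dots> = norm1 d (\<lambda>i. s * (T p i - \<pi> i) + (-s) * (T q i - \<pi> i))"
      by (simp only: lin) (simp add: algebra_simps)
    also have "\<dots> \<le> s * norm1 d (\<lambda>i. T p i - \<pi> i) + s * norm1 d (\<lambda>i. T q i - \<pi> i)"
      using norm1_lin[of d s _ "-s"] sp by simp
    also have "\<dots> \<le> s * r + s * r"
      using bnd[OF \<open>p \<in> simplex d\<close>] bnd[OF \<open>q \<in> simplex d\<close>] sp
      by (intro add_mono mult_left_mono) auto
    finally show ?thesis using nv by simp
  qed
qed

lemma mix_contract:
  assumes nx: "\<And>w. norm1 d (mv d X w) \<le> norm1 d w"
    and tm: "tmix d X \<le> enat m"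
    and zs: "(\<Sum>i<d. v i) = 0"
  shows "norm1 d ((mv d X ^^ m) v) \<le> norm1 d v / 4"
proof -
  have ex1: "\<exists>!\<pi>. stationary d X \<pi>" using tm unfolding tmix_def by (auto split: if_splits)
  define \<pi> where "\<pi> = (THE \<pi>. stationary d X \<pi>)"
  have st: "stationary d X \<pi>" unfolding \<pi>_def by (rule theI'[OF ex1])
  have exD: "\<exists>t. Dmix d X \<pi> t \<le> 1/4"
    using tm ex1 unfolding tmix_def \<pi>_def[symmetric] by (auto simp: Let_def split: if_splits)
  define t0 where "t0 = (LEAST t. Dmix d X \<pi> t \<le> 1/4)"
  have D0: "Dmix d X \<pi> t0 \<le> 1/4" unfolding t0_def by (rule LeastI_ex[OF exD])
  have "tmix d X = enat t0"
    using ex1 exD unfolding tmix_def \<pi>_def[symmetric] t0_def by (simp add: Let_def)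
  hence t0m: "t0 \<le> m" using tm by simp
  have pin: "\<pi> \<in> simplex d" using st unfolding stationary_def by simp
  have bnd: "norm1 d (\<lambda>i. (mv d X ^^ t0) p i - \<pi> i) \<le> 1/4" if p: "p \<in> simplex d" for p
  proof -
    have e: "norm1 d (\<lambda>i. (mv d X ^^ t0) p i - \<pi> i) = norm1 d (\<lambda>i. mv d (mpow d X t0) p i - \<pi> i)"
      by (rule norm1_cong) (simp add: mpow_eq)
    have "bdd_above ((\<lambda>p. norm1 d (\<lambda>i. mv d (mpow d X t0) p i - \<pi> i)) ` simplex d)"
    proof (rule bdd_aboveI2)
      fix p assume "p \<in> simplex d"
      have "norm1 d (\<lambda>i. mv d (mpow d X t0) p i - \<pi> i) = norm1 d (\<lambda>i. (mv d X ^^ t0) p i - \<pi> i)"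
        by (rule norm1_cong) (simp add: mpow_eq)
      also have "\<dots> \<le> norm1 d ((mv d X ^^ t0) p) + norm1 d \<pi>" by (rule norm1_diff)
      also have "\<dots> \<le> 2" using Tk_nonexp[OF nx, of t0 p] simplex_norm1[OF \<open>p \<in> simplex d\<close>]
          simplex_norm1[OF pin] by simp
      finally show "norm1 d (\<lambda>i. mv d (mpow d X t0) p i - \<pi> i) \<le> 2" .
    qed
    hence "norm1 d (\<lambda>i. mv d (mpow d X t0) p i - \<pi> i) \<le> Dmix d X \<pi> t0"
      unfolding Dmix_def using p by (rule cSUP_upper2) simp
    thus ?thesis using e D0 by simp
  qed
  have c0: "norm1 d ((mv d X ^^ t0) v) \<le> (1/4) * norm1 d v"
    by (rule decomp[OF Tk_lin Tk_cong bnd zs]) auto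
  have "(mv d X ^^ m) v = (mv d X ^^ (m - t0)) ((mv d X ^^ t0) v)"
    using t0m by (metis funpow_add le_add_diff_inverse2 o_apply)
  hence "norm1 d ((mv d X ^^ m) v) \<le> norm1 d ((mv d X ^^ t0) v)" using Tk_nonexp[OF nx] by simp
  thus ?thesis using c0 norm1_nonneg[of d v] by simp
qed


definition gok :: "(nat \<Rightarrow> real) \<Rightarrow> bool" where
  "gok \<gamma> \<longleftrightarrow> (\<forall>t\<ge>1. 0 \<le> \<gamma> t \<and> \<gamma> t \<le> 1)"

lemma gext_range: "gok \<gamma> \<Longrightarrow> 0 \<le> gext \<gamma> k \<and> gext \<gamma> k \<le> 1"
  unfolding gext_def gok_def by auto

lemma lamw_nonneg: "gok \<gamma> \<Longrightarrow> 0 \<le> lamw \<gamma> t i"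
  unfolding lamw_def using gext_range
  by (intro mult_nonneg_nonneg prod_nonneg) (auto simp: gext_range)

lemma lamw_neg: "int t - int i < 0 \<Longrightarrow> lamw \<gamma> t i = 0"
  unfolding lamw_def gext_def by simp

lemma lamw_tele: "(\<Sum>i\<in>{1..m}. lamw \<gamma> t i) = 1 - (\<Prod>j\<in>{1..m}. (1 - gext \<gamma> (int t - int j)))"
proof (induction m)
  case 0 thus ?case by simp
next
  case (Suc m)
  have e: "{1..<Suc m} = {1..m}" by auto
  have s: "(\<Sum>i\<in>{1..Suc m}. lamw \<gamma> t i) = (\<Sum>i\<in>{1..m}. lamw \<gamma> t i) + lamw \<gamma> t (Suc m)"
    by (simp add: sum.cl_ivl_Suc)
  have p: "(\<Prod>j\<in>{1..Suc m}. (1 - gext \<gamma> (int t - int j))) = (\<Prod>j\<in>{1..m}. (1 - gext \<gamma> (int t - int j))) * (1 - gext \<gamma> (int t - int (Suc m)))"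
    by (simp add: prod.cl_ivl_Suc)
  have l: "lamw \<gamma> t (Suc m) = gext \<gamma> (int t - int (Suc m)) * (\<Prod>j\<in>{1..m}. (1 - gext \<gamma> (int t - int j)))"
    unfolding lamw_def e by simp
  show ?case unfolding s l p Suc.IH by (simp add: algebra_simps)
qed

lemma lam0_eq: "lam0 \<gamma> H t = (\<Prod>j\<in>{1..H}. (1 - gext \<gamma> (int t - int j)))"
  unfolding lam0_def lamw_tele by simp

lemma lam0_range: "gok \<gamma> \<Longrightarrow> 0 \<le> lam0 \<gamma> H t \<and> lam0 \<gamma> H t \<le> 1"
  unfolding lam0_eq using gext_range
  by (auto intro!: prod_nonneg prod_le_1 simp: gext_range)

lemma lam_sum: "lam0 \<gamma> H t + (\<Sum>i\<in>{1..H}. lamw \<gamma> t i) = 1"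
  unfolding lam0_def by simp

definition wok :: "nat \<Rightarrow> (nat \<Rightarrow> real) \<Rightarrow> (nat \<Rightarrow> nat \<Rightarrow> real) \<Rightarrow> bool" where
  "wok d x1 w \<longleftrightarrow> x1 \<in> simplex d \<and> (\<forall>t\<ge>1. w t \<in> simplex d)"

lemma wext_simplex: "wok d x1 w \<Longrightarrow> 0 \<le> k \<Longrightarrow> wext x1 w k \<in> simplex d"
  unfolding wok_def wext_def by auto

lemma wext_norm: "wok d x1 w \<Longrightarrow> norm1 d (wext x1 w k) \<le> 1"
  using wext_simplex[of d x1 w k] simplex_norm1 by (cases "k < 0") (auto simp: wext_def norm1_def)

lemma wext_nonneg: "wok d x1 w \<Longrightarrow> 0 \<le> wext x1 w k i"
  using wext_simplex[of d x1 w k] by (cases "k < 0") (auto simp: wext_def simplex_def)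

lemma simplex_sc_D: assumes "p \<in> simplex_sc d a" "0 \<le> a"
  shows "\<And>i. 0 \<le> p i" "\<And>i. d \<le> i \<Longrightarrow> p i = 0" "(\<Sum>i<d. p i) = a"
proof -
  obtain q where q: "q \<in> simplex d" "p = (\<lambda>i. a * q i)" using assms(1) unfolding simplex_sc_def by auto
  show "\<And>i. 0 \<le> p i" using q assms(2) unfolding simplex_def by auto
  show "\<And>i. d \<le> i \<Longrightarrow> p i = 0" using q unfolding simplex_def by auto
  show "(\<Sum>i<d. p i) = a" using q unfolding simplex_def by (simp add: sum_distrib_left[symmetric])
qed

definition pmok :: "nat \<Rightarrow> nat \<Rightarrow> real \<Rightarrow> (nat \<Rightarrow> real) \<Rightarrow> (nat \<Rightarrow> nat \<Rightarrow> nat \<Rightarrow> real) \<Rightarrow> bool" where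
  "pmok d H a p M \<longleftrightarrow> 0 \<le> a \<and> a \<le> 1 \<and> p \<in> simplex_sc d a \<and> (\<forall>h\<in>{1..H}. M h \<in> stoch_sc d a)"

lemma u_nonneg: assumes "gok \<gamma>" "wok d x1 w" "pmok d H a p M"
  shows "0 \<le> uc d H \<gamma> x1 w p M s k"
  using assms lam0_range[OF assms(1)] lamw_nonneg[OF assms(1)] simplex_sc_D[of p d a]
    mv_sc_nonneg[of _ d a "wext x1 w _"] wext_nonneg[OF assms(2)]
  unfolding uc_def pmok_def
  by (intro add_nonneg_nonneg mult_nonneg_nonneg sum_nonneg) auto

lemma u_vanish: assumes "pmok d H a p M" "d \<le> k"
  shows "uc d H \<gamma> x1 w p M s k = 0"
  using assms simplex_sc_D[of p d a] unfolding uc_def pmok_def by (simp add: mv_vanish)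

lemma u_sum: assumes "gok \<gamma>" "wok d x1 w" "pmok d H a p M"
  shows "(\<Sum>k<d. uc d H \<gamma> x1 w p M s k) = a"
proof -
  have a: "0 \<le> a" "p \<in> simplex_sc d a" "\<And>h. h \<in> {1..H} \<Longrightarrow> M h \<in> stoch_sc d a"
    using assms(3) unfolding pmok_def by auto
  have j: "lamw \<gamma> s j * (\<Sum>k<d. mv d (M j) (wext x1 w (int s - int j)) k) = lamw \<gamma> s j * a"
    if "j \<in> {1..H}" for j
  proof (cases "int s - int j < 0")
    case True thus ?thesis by (simp add: lamw_neg)
  next
    case False
    hence "wext x1 w (int s - int j) \<in> simplex d" using wext_simplex[OF assms(2)] by simp
    thus ?thesis using mv_sc_sum[OF a(3)[OF that] a(1)] unfolding simplex_def by simp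
  qed
  have "(\<Sum>k<d. uc d H \<gamma> x1 w p M s k) = lam0 \<gamma> H s * (\<Sum>k<d. p k)
      + (\<Sum>j\<in>{1..H}. lamw \<gamma> s j * (\<Sum>k<d. mv d (M j) (wext x1 w (int s - int j)) k))"
    unfolding uc_def by (simp add: sum.distrib sum_distrib_left sum.swap[of _ "{..<d}"])
  also have "\<dots> = lam0 \<gamma> H s * a + (\<Sum>j\<in>{1..H}. lamw \<gamma> s j * a)"
  proof -
    have jj: "(\<Sum>j\<in>{1..H}. lamw \<gamma> s j * (\<Sum>k<d. mv d (M j) (wext x1 w (int s - int j)) k)) = (\<Sum>j\<in>{1..H}. lamw \<gamma> s j * a)"
      by (rule sum.cong[OF refl]) (rule j)
    show ?thesis using simplex_sc_D(3)[OF a(2,1)] jj by simp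
  qed
  also have "\<dots> = (lam0 \<gamma> H s + (\<Sum>j\<in>{1..H}. lamw \<gamma> s j)) * a"
    by (simp add: sum_distrib_right[symmetric] distrib_right)
  also have "\<dots> = a" using lam_sum[of \<gamma> H s] by simp
  finally show ?thesis .
qed

lemma u_norm: assumes "gok \<gamma>" "wok d x1 w" "pmok d H a p M"
  shows "norm1 d (uc d H \<gamma> x1 w p M s) = a"
  unfolding norm1_def using u_nonneg[OF assms] u_sum[OF assms] by simp

lemma u_Iset: assumes "gok \<gamma>" "wok d x1 w" "pmok d H a p M" "alb \<le> a" "a \<le> aub"
  shows "uc d H \<gamma> x1 w p M s \<in> Iset d alb aub"
proof -
  let ?u = "uc d H \<gamma> x1 w p M s"
  have "?u \<in> simplex_sc d a"
  proof (cases "a = 0")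
    case True
    have "\<forall>k. ?u k = 0"
    proof
      fix k show "?u k = 0"
      proof (cases "k < d")
        case True
        have "(\<Sum>k<d. ?u k) = 0" using u_sum[OF assms(1-3)] \<open>a = 0\<close> by simp
        thus ?thesis using u_nonneg[OF assms(1-3)] True
          by (subst (asm) sum_nonneg_eq_0_iff) auto
      qed (simp add: u_vanish[OF assms(3)])
    qed
    moreover have "x1 \<in> simplex d" using assms(2) unfolding wok_def by simp
    ultimately show ?thesis unfolding simplex_sc_def using True by auto
  next
    case False
    hence ap: "0 < a" using assms(3) unfolding pmok_def by simp
    have q: "(\<lambda>k. ?u k / a) \<in> simplex d" unfolding simplex_def
      using u_nonneg[OF assms(1-3)] u_vanish[OF assms(3)] u_sum[OF assms(1-3)] ap
      by (auto simp: sum_divide_distrib[symmetric])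
    show ?thesis unfolding simplex_sc_def
    proof (rule CollectI, rule exI[where x="\<lambda>k. ?u k / a"], rule conjI)
      show "?u = (\<lambda>i. a * (?u i / a))" using ap by simp
    qed (rule q)
  qed
  thus ?thesis unfolding Iset_def using assms(4,5) by auto
qed

lemma x_simplex: assumes "gok \<gamma>" "wok d x1 w" "pmok d H a p M" "stoch d A" "stoch d B"
  shows "xtraj d H A B \<gamma> x1 w p M n \<in> simplex d"
proof (induction n)
  case 0 thus ?case using assms(2) by (simp add: wok_def)
next
  case (Suc n)
  let ?x = "xtraj d H A B \<gamma> x1 w p M n" and ?u = "uc d H \<gamma> x1 w p M (Suc n)"
  have g: "0 \<le> \<gamma> (Suc n)" "\<gamma> (Suc n) \<le> 1" using assms(1) unfolding gok_def by auto
  have a: "0 \<le> a" "a \<le> 1" using assms(3) unfolding pmok_def by auto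
  have ws: "w (Suc n) \<in> simplex d" using assms(2) unfolding wok_def by auto
  have nu: "norm1 d ?u = a" by (rule u_norm[OF assms(1-3)])
  have A1: "A \<in> stoch_sc d 1" "B \<in> stoch_sc d 1" using stoch_sc1 assms(4,5) by auto
  have xn: "\<And>i. 0 \<le> ?x i" "\<And>i. d \<le> i \<Longrightarrow> ?x i = 0" "(\<Sum>i<d. ?x i) = 1"
    using Suc unfolding simplex_def by auto
  have un: "\<And>j. 0 \<le> ?u j" using u_nonneg[OF assms(1-3)] by simp
  have "(\<Sum>k<d. (1 - \<gamma> (Suc n)) * ((1 - a) * mv d A ?x k + mv d B ?u k) + \<gamma> (Suc n) * w (Suc n) k)
     = (1 - \<gamma> (Suc n)) * ((1 - a) * (\<Sum>k<d. mv d A ?x k) + (\<Sum>k<d. mv d B ?u k)) + \<gamma> (Suc n) * (\<Sum>k<d. w (Suc n) k)"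
    by (simp only: sum.distrib sum_distrib_left[symmetric])
  also have "\<dots> = 1" using mv_sc_sum[OF A1(1)] mv_sc_sum[OF A1(2)] xn(3) u_sum[OF assms(1-3)] ws
    by (simp add: simplex_def algebra_simps)
  finally have s: "(\<Sum>k<d. (1 - \<gamma> (Suc n)) * ((1 - a) * mv d A ?x k + mv d B ?u k) + \<gamma> (Suc n) * w (Suc n) k) = 1" .
  have xs: "xtraj d H A B \<gamma> x1 w p M (Suc n) = (\<lambda>k. (1 - \<gamma> (Suc n)) * ((1 - a) * mv d A ?x k + mv d B ?u k) + \<gamma> (Suc n) * w (Suc n) k)"
    using nu by (simp add: Let_def)
  have p1: "0 \<le> (1 - \<gamma> (Suc n)) * ((1 - a) * mv d A ?x k + mv d B ?u k) + \<gamma> (Suc n) * w (Suc n) k" for k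
    using g a ws mv_sc_nonneg[OF A1(1) _ xn(1), where i=k] mv_sc_nonneg[OF A1(2) _ un, where i=k]
    by (intro add_nonneg_nonneg mult_nonneg_nonneg) (auto simp: simplex_def)
  have p2: "(1 - \<gamma> (Suc n)) * ((1 - a) * mv d A ?x k + mv d B ?u k) + \<gamma> (Suc n) * w (Suc n) k = 0" if "d \<le> k" for k
    using ws that by (simp add: mv_vanish simplex_def)
  show ?case unfolding xs simplex_def using p1 p2 s by blast
qed


lemma norm1_sum: "norm1 d (\<lambda>k. \<Sum>j\<in>S. f j k) \<le> (\<Sum>j\<in>S. norm1 d (f j))"
proof -
  have "norm1 d (\<lambda>k. \<Sum>j\<in>S. f j k) \<le> (\<Sum>k<d. \<Sum>j\<in>S. \<bar>f j k\<bar>)"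
    unfolding norm1_def by (rule sum_mono) (rule sum_abs)
  also have "\<dots> = (\<Sum>j\<in>S. norm1 d (f j))" unfolding norm1_def by (rule sum.swap)
  finally show ?thesis .
qed

lemma dp_le: "norm1 d p \<le> normdH d H p M"
  unfolding normdH_def by (rule real_le_rsqrt) (intro add_increasing2 sum_nonneg, auto)

lemma normdH_nonneg': "0 \<le> (norm1 d p)\<^sup>2 + (\<Sum>h\<in>{1..H}. \<Sum>j<d. (\<Sum>i<d. \<bar>M h i j\<bar>)\<^sup>2)"
  by (intro add_nonneg_nonneg sum_nonneg) auto

lemma normdH_nonneg: "0 \<le> normdH d H p M"
  unfolding normdH_def using normdH_nonneg'[where d=d and p=p and H=H and M=M] by simp

lemma dM_le: assumes "h \<in> {1..H}" "j < d"
  shows "(\<Sum>i<d. \<bar>M h i j\<bar>) \<le> normdH d H p M"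
  unfolding normdH_def
proof (rule real_le_rsqrt)
  have "(\<Sum>i<d. \<bar>M h i j\<bar>)\<^sup>2 \<le> (\<Sum>j<d. (\<Sum>i<d. \<bar>M h i j\<bar>)\<^sup>2)"
    using assms(2) by (intro member_le_sum) auto
  also have "\<dots> \<le> (\<Sum>h\<in>{1..H}. \<Sum>j<d. (\<Sum>i<d. \<bar>M h i j\<bar>)\<^sup>2)"
    using assms(1) by (intro member_le_sum) (auto intro!: sum_nonneg)
  finally show "(\<Sum>i<d. \<bar>M h i j\<bar>)\<^sup>2 \<le> (norm1 d p)\<^sup>2 + (\<Sum>h\<in>{1..H}. \<Sum>j<d. (\<Sum>i<d. \<bar>M h i j\<bar>)\<^sup>2)"
    using zero_le_power2[of "norm1 d p"] by linarith
qed

lemma da_le: assumes "pmok d H a p M" "pmok d H a' p' M'"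
  shows "\<bar>a - a'\<bar> \<le> normdH d H (\<lambda>i. p i - p' i) (\<lambda>h i j. M h i j - M' h i j)"
proof -
  have "a - a' = (\<Sum>i<d. p i - p' i)"
    using simplex_sc_D(3)[of p d a] simplex_sc_D(3)[of p' d a'] assms
    unfolding pmok_def by (simp add: sum_subtractf)
  hence "\<bar>a - a'\<bar> \<le> norm1 d (\<lambda>i. p i - p' i)" unfolding norm1_def by (simp add: sum_abs)
  thus ?thesis using dp_le order_trans by blast
qed

lemma du_le: assumes g: "gok \<gamma>" and w: "wok d x1 w" and pm: "pmok d H a p M" "pmok d H a' p' M'"
  shows "norm1 d (\<lambda>k. uc d H \<gamma> x1 w p M s k - uc d H \<gamma> x1 w p' M' s k)
     \<le> normdH d H (\<lambda>i. p i - p' i) (\<lambda>h i j. M h i j - M' h i j)"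
proof -
  let ?N = "normdH d H (\<lambda>i. p i - p' i) (\<lambda>h i j. M h i j - M' h i j)"
  let ?W = "\<lambda>j. wext x1 w (int s - int j)"
  let ?D = "\<lambda>j. mv d (\<lambda>i k. M j i k - M' j i k) (?W j)"
  have e: "(\<lambda>k. uc d H \<gamma> x1 w p M s k - uc d H \<gamma> x1 w p' M' s k)
     = (\<lambda>k. lam0 \<gamma> H s * (p k - p' k) + (\<Sum>j\<in>{1..H}. lamw \<gamma> s j * ?D j k))"
    unfolding uc_def mv_matdiff by (simp add: algebra_simps sum_subtractf)
  have Dj: "norm1 d (?D j) \<le> ?N" if "j \<in> {1..H}" for j
  proof -
    have "norm1 d (?D j) \<le> ?N * norm1 d (?W j)"
      by (rule mv_colbound) (rule dM_le[OF that])
    also have "\<dots> \<le> ?N * 1" by (intro mult_left_mono wext_norm[OF w] normdH_nonneg)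
    finally show ?thesis by simp
  qed
  have "norm1 d (\<lambda>k. lam0 \<gamma> H s * (p k - p' k) + (\<Sum>j\<in>{1..H}. lamw \<gamma> s j * ?D j k))
      \<le> \<bar>lam0 \<gamma> H s\<bar> * norm1 d (\<lambda>k. p k - p' k) + \<bar>1\<bar> * norm1 d (\<lambda>k. (\<Sum>j\<in>{1..H}. lamw \<gamma> s j * ?D j k))"
    using norm1_lin[of d "lam0 \<gamma> H s" "\<lambda>k. p k - p' k" 1 "\<lambda>k. (\<Sum>j\<in>{1..H}. lamw \<gamma> s j * ?D j k)"] by simp
  also have "\<dots> \<le> lam0 \<gamma> H s * ?N + (\<Sum>j\<in>{1..H}. lamw \<gamma> s j * ?N)"
  proof (rule add_mono)
    show "\<bar>lam0 \<gamma> H s\<bar> * norm1 d (\<lambda>k. p k - p' k) \<le> lam0 \<gamma> H s * ?N"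
      using lam0_range[OF g] dp_le by (simp add: mult_left_mono)
    have "norm1 d (\<lambda>k. (\<Sum>j\<in>{1..H}. lamw \<gamma> s j * ?D j k)) \<le> (\<Sum>j\<in>{1..H}. norm1 d (\<lambda>k. lamw \<gamma> s j * ?D j k))"
      by (rule norm1_sum)
    also have "\<dots> \<le> (\<Sum>j\<in>{1..H}. lamw \<gamma> s j * ?N)"
      by (rule sum_mono) (simp add: norm1_scale lamw_nonneg[OF g] Dj mult_left_mono)
    finally show "\<bar>1\<bar> * norm1 d (\<lambda>k. (\<Sum>j\<in>{1..H}. lamw \<gamma> s j * ?D j k)) \<le> (\<Sum>j\<in>{1..H}. lamw \<gamma> s j * ?N)"
      by simp
  qed
  also have "\<dots> = (lam0 \<gamma> H s + (\<Sum>j\<in>{1..H}. lamw \<gamma> s j)) * ?N"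
    by (simp add: sum_distrib_right distrib_right)
  also have "\<dots> = ?N" using lam_sum[of \<gamma> H s] by simp
  finally show ?thesis unfolding e .
qed

lemma rec_bound:
  fixes f :: "nat \<Rightarrow> real"
  assumes "0 \<le> q" "f 0 \<le> Bd" "\<And>m. f (Suc m) \<le> q * f m + (1 - q) * Bd"
  shows "f m \<le> Bd"
proof (induction m)
  case 0 thus ?case using assms(2) .
next
  case (Suc m)
  have "f (Suc m) \<le> q * f m + (1 - q) * Bd" by (rule assms(3))
  also have "\<dots> \<le> q * Bd + (1 - q) * Bd" using Suc assms(1) by (simp add: mult_left_mono)
  finally show ?case by (simp add: algebra_simps)
qed


lemma x_step:
  assumes g: "gok \<gamma>" and w: "wok d x1 w" and pm: "pmok d H a p M" and pm': "pmok d H a' p' M'"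
  shows "(\<lambda>k. xtraj d H A B \<gamma> x1 w p M (Suc m) k - xtraj d H A B \<gamma> x1 w p' M' (Suc m) k)
   = (\<lambda>k. ((1 - \<gamma> (Suc m)) * (1 - a)) * mv d A (\<lambda>i. xtraj d H A B \<gamma> x1 w p M m i - xtraj d H A B \<gamma> x1 w p' M' m i) k
       + 1 * ((1 - \<gamma> (Suc m)) * ((a' - a) * mv d A (xtraj d H A B \<gamma> x1 w p' M' m) k
           + mv d B (\<lambda>i. uc d H \<gamma> x1 w p M (Suc m) i - uc d H \<gamma> x1 w p' M' (Suc m) i) k)))"
  using u_norm[OF g w pm, of "Suc m"] u_norm[OF g w pm', of "Suc m"]
  by (simp add: Let_def mv_diff algebra_simps)

lemma e_bound:
  assumes g: "gok \<gamma>" and w: "wok d x1 w" and pm: "pmok d H a p M" and pm': "pmok d H a' p' M'"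
    and A: "stoch d A" and B: "stoch d B"
  shows "norm1 d (\<lambda>k. (1 - \<gamma> (Suc m)) * ((a' - a) * mv d A (xtraj d H A B \<gamma> x1 w p' M' m) k
           + mv d B (\<lambda>i. uc d H \<gamma> x1 w p M (Suc m) i - uc d H \<gamma> x1 w p' M' (Suc m) i) k))
     \<le> 2 * normdH d H (\<lambda>i. p i - p' i) (\<lambda>h i j. M h i j - M' h i j)"
proof -
  let ?N = "normdH d H (\<lambda>i. p i - p' i) (\<lambda>h i j. M h i j - M' h i j)"
  let ?X = "mv d A (xtraj d H A B \<gamma> x1 w p' M' m)"
  let ?U = "mv d B (\<lambda>i. uc d H \<gamma> x1 w p M (Suc m) i - uc d H \<gamma> x1 w p' M' (Suc m) i)"
  have g1: "\<bar>1 - \<gamma> (Suc m)\<bar> \<le> 1" using g unfolding gok_def by auto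
  have X: "norm1 d ?X \<le> 1" using mv_stoch_norm[OF A] simplex_norm1[OF x_simplex[OF g w pm' A B]] by metis
  have U: "norm1 d ?U \<le> ?N" using mv_stoch_norm[OF B] du_le[OF g w pm pm'] order_trans by blast
  have "norm1 d (\<lambda>k. (a' - a) * ?X k + 1 * ?U k) \<le> \<bar>a' - a\<bar> * norm1 d ?X + \<bar>1\<bar> * norm1 d ?U"
    by (rule norm1_lin)
  also have "\<dots> \<le> ?N * 1 + ?N"
    using da_le[OF pm pm'] X U normdH_nonneg norm1_nonneg
    by (intro add_mono mult_mono) (auto simp: abs_minus_commute)
  finally have h: "norm1 d (\<lambda>k. (a' - a) * ?X k + ?U k) \<le> 2 * ?N" by simp
  have "norm1 d (\<lambda>k. (1 - \<gamma> (Suc m)) * ((a' - a) * ?X k + ?U k)) = \<bar>1 - \<gamma> (Suc m)\<bar> * norm1 d (\<lambda>k. (a' - a) * ?X k + ?U k)"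
    by (rule norm1_scale)
  also have "\<dots> \<le> 1 * (2 * ?N)" using g1 h by (intro mult_mono) (auto simp: norm1_nonneg)
  finally show ?thesis by simp
qed


lemma Phi_lin: "(\<Sum>k<n. norm1 d ((mv d A ^^ k) (\<lambda>i. c * y i + 1 * e i)))
   \<le> \<bar>c\<bar> * (\<Sum>k<n. norm1 d ((mv d A ^^ k) y)) + (\<Sum>k<n. norm1 d ((mv d A ^^ k) e))"
proof -
  have "(\<Sum>k<n. norm1 d ((mv d A ^^ k) (\<lambda>i. c * y i + 1 * e i)))
     \<le> (\<Sum>k<n. \<bar>c\<bar> * norm1 d ((mv d A ^^ k) y) + \<bar>1\<bar> * norm1 d ((mv d A ^^ k) e))"
    unfolding Tk_lin by (rule sum_mono) (rule norm1_lin)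
  thus ?thesis by (simp add: sum.distrib sum_distrib_left)
qed

lemma Phi_le: assumes "stoch d A"
  shows "(\<Sum>k<n. norm1 d ((mv d A ^^ k) y)) \<le> real n * norm1 d y"
proof -
  have "(\<Sum>k<n. norm1 d ((mv d A ^^ k) y)) \<le> (\<Sum>k<n. norm1 d y)"
    by (rule sum_mono) (rule Tk_nonexp[OF mv_stoch_norm[OF assms]])
  thus ?thesis by simp
qed

lemma Phi_ge: assumes "1 \<le> n"
  shows "norm1 d y \<le> (\<Sum>k<n. norm1 d ((mv d A ^^ k) y))"
proof -
  have "norm1 d ((mv d A ^^ 0) y) \<le> (\<Sum>k<n. norm1 d ((mv d A ^^ k) y))"
    using assms by (intro member_le_sum) (auto simp: norm1_nonneg)
  thus ?thesis by simp
qed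

lemma Phi_shift: "(\<Sum>k<n. norm1 d ((mv d A ^^ k) (mv d A y)))
   = (\<Sum>k<n. norm1 d ((mv d A ^^ k) y)) - norm1 d y + norm1 d ((mv d A ^^ n) y)"
proof -
  have e: "(mv d A ^^ k) (mv d A y) = (mv d A ^^ Suc k) y" for k
    by (simp add: funpow_Suc_right del: funpow.simps)
  have "(\<Sum>k<Suc n. norm1 d ((mv d A ^^ k) y)) = norm1 d ((mv d A ^^ 0) y) + (\<Sum>k<n. norm1 d ((mv d A ^^ Suc k) y))"
    by (rule sum.lessThan_Suc_shift)
  moreover have "(\<Sum>k<Suc n. norm1 d ((mv d A ^^ k) y)) = (\<Sum>k<n. norm1 d ((mv d A ^^ k) y)) + norm1 d ((mv d A ^^ n) y)"
    by simp
  ultimately show ?thesis unfolding e by simp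
qed

lemma traj_bound:
  assumes g: "gok \<gamma>" and w: "wok d x1 w" and pm: "pmok d H a p M" and pm': "pmok d H a' p' M'"
    and A: "stoch d A" and B: "stoch d B" and tau: "0 < \<tau>"
    and alt: "1 / (96 * real \<tau>) \<le> a \<or> (\<exists>n. 1 \<le> n \<and> n \<le> 4 * \<tau> \<and>
        (\<forall>v. (\<Sum>i<d. v i) = 0 \<longrightarrow> norm1 d ((mv d A ^^ n) v) \<le> norm1 d v / 2))"
  shows "norm1 d (\<lambda>i. xtraj d H A B \<gamma> x1 w p M m i - xtraj d H A B \<gamma> x1 w p' M' m i)
      \<le> 192 * (real \<tau>)\<^sup>2 * normdH d H (\<lambda>i. p i - p' i) (\<lambda>h i j. M h i j - M' h i j)"
proof -
  define N where "N = normdH d H (\<lambda>i. p i - p' i) (\<lambda>h i j. M h i j - M' h i j)"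
  define \<delta> where "\<delta> = (\<lambda>m i. xtraj d H A B \<gamma> x1 w p M m i - xtraj d H A B \<gamma> x1 w p' M' m i)"
  define c where "c = (\<lambda>m. (1 - \<gamma> (Suc m)) * (1 - a))"
  define e where "e = (\<lambda>m k. (1 - \<gamma> (Suc m)) * ((a' - a) * mv d A (xtraj d H A B \<gamma> x1 w p' M' m) k
           + mv d B (\<lambda>i. uc d H \<gamma> x1 w p M (Suc m) i - uc d H \<gamma> x1 w p' M' (Suc m) i) k))"
  have N0: "0 \<le> N" unfolding N_def by (rule normdH_nonneg)
  have a01: "0 \<le> a" "a \<le> 1" using pm unfolding pmok_def by auto
  have step: "\<delta> (Suc m) = (\<lambda>k. c m * mv d A (\<delta> m) k + 1 * e m k)" for m
    unfolding \<delta>_def c_def e_def by (rule x_step[OF g w pm pm'])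
  have eb: "norm1 d (e m) \<le> 2 * N" for m
    unfolding e_def N_def by (rule e_bound[OF g w pm pm' A B])
  have c01: "0 \<le> c m" "c m \<le> 1 - a" for m
    using g a01 unfolding c_def gok_def
    by (auto intro!: mult_nonneg_nonneg simp: mult_left_le_one_le)
  have d0: "\<delta> 0 = (\<lambda>i. 0)" unfolding \<delta>_def by simp
  have tpos: "0 < real \<tau>" using tau by simp
  have tt: "real \<tau> \<le> (real \<tau>)\<^sup>2" using tau by (simp add: power2_eq_square)
  have main: "norm1 d (\<delta> m) \<le> 192 * (real \<tau>)\<^sup>2 * N"
  proof (cases "1 / (96 * real \<tau>) \<le> a")
    case True
    have ap: "0 < a" using True tpos by (smt (verit) divide_pos_pos)
    have "norm1 d (\<delta> m) \<le> 2 * N / a"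
    proof (rule rec_bound[where q = "1 - a"])
      show "0 \<le> 1 - a" using a01 by simp
      show "norm1 d (\<delta> 0) \<le> 2 * N / a" unfolding d0 using N0 ap by (simp add: norm1_def)
      fix m
      have "norm1 d (\<delta> (Suc m)) \<le> \<bar>c m\<bar> * norm1 d (mv d A (\<delta> m)) + \<bar>1\<bar> * norm1 d (e m)"
        unfolding step by (rule norm1_lin)
      also have "\<dots> \<le> (1 - a) * norm1 d (\<delta> m) + 2 * N"
      proof -
        have m1: "c m * norm1 d (mv d A (\<delta> m)) \<le> (1 - a) * norm1 d (\<delta> m)"
          using c01[of m] mv_stoch_norm[OF A, of "\<delta> m"] norm1_nonneg[of d "mv d A (\<delta> m)"] a01
          by (intro mult_mono) auto
        thus ?thesis using eb[of m] c01[of m] by simp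
      qed
      also have "\<dots> = (1 - a) * norm1 d (\<delta> m) + (1 - (1 - a)) * (2 * N / a)" using ap by simp
      finally show "norm1 d (\<delta> (Suc m)) \<le> (1 - a) * norm1 d (\<delta> m) + (1 - (1 - a)) * (2 * N / a)" .
    qed
    also have "2 * N / a \<le> 2 * N * (96 * real \<tau>)"
    proof -
      have "1 / a \<le> 96 * real \<tau>" using True ap tpos by (simp add: field_simps)
      hence "N * (1 / a) \<le> N * (96 * real \<tau>)" using N0 by (rule mult_left_mono)
      moreover have "2 * N / a = 2 * (N * (1 / a))" by simp
      ultimately show ?thesis by linarith
    qed
    also have "\<dots> \<le> 192 * (real \<tau>)\<^sup>2 * N" using tt N0 by (simp add: mult_left_mono algebra_simps)
    finally show ?thesis .
  next
    case False
    then obtain n where n: "1 \<le> n" "n \<le> 4 * \<tau>"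
      and con: "\<And>v. (\<Sum>i<d. v i) = 0 \<Longrightarrow> norm1 d ((mv d A ^^ n) v) \<le> norm1 d v / 2"
      using alt by blast
    define \<Phi> where "\<Phi> = (\<lambda>y. \<Sum>k<n. norm1 d ((mv d A ^^ k) y))"
    have np: "0 < real n" using n by simp
    have zs: "(\<Sum>i<d. \<delta> m i) = 0" for m
      using x_simplex[OF g w pm A B, of m] x_simplex[OF g w pm' A B, of m]
      unfolding \<delta>_def simplex_def by (simp add: sum_subtractf)
    have "\<Phi> (\<delta> m) \<le> 4 * (real n)\<^sup>2 * N"
    proof (rule rec_bound[where q = "1 - 1 / (2 * real n)"])
      show "0 \<le> 1 - 1 / (2 * real n)" using n by simp
      show "\<Phi> (\<delta> 0) \<le> 4 * (real n)\<^sup>2 * N"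
      proof -
        have z: "0 \<le> 4 * (real n)\<^sup>2 * N" using N0 by simp
        have "\<Phi> (\<delta> 0) \<le> real n * norm1 d (\<delta> 0)" unfolding \<Phi>_def by (rule Phi_le[OF A])
        hence "\<Phi> (\<delta> 0) \<le> 0" unfolding d0 by (simp add: norm1_def)
        thus ?thesis using z by linarith
      qed
      fix m
      have ge: "norm1 d (\<delta> m) \<le> \<Phi> (\<delta> m)" unfolding \<Phi>_def by (rule Phi_ge[OF n(1)])
      have le: "\<Phi> (\<delta> m) \<le> real n * norm1 d (\<delta> m)" unfolding \<Phi>_def by (rule Phi_le[OF A])
      have "\<Phi> (\<delta> (Suc m)) \<le> \<bar>c m\<bar> * \<Phi> (mv d A (\<delta> m)) + \<Phi> (e m)"
        unfolding step \<Phi>_def by (rule Phi_lin)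
      also have "\<Phi> (mv d A (\<delta> m)) \<le> \<Phi> (\<delta> m) - norm1 d (\<delta> m) / 2"
        unfolding \<Phi>_def Phi_shift using con[OF zs[of m]] by simp
      hence "\<bar>c m\<bar> * \<Phi> (mv d A (\<delta> m)) \<le> 1 * (\<Phi> (\<delta> m) - norm1 d (\<delta> m) / 2)"
        using c01[of m] a01 ge norm1_nonneg[of d "\<delta> m"]
        by (intro mult_mono) (auto simp: \<Phi>_def intro: sum_nonneg norm1_nonneg)
      hence "\<bar>c m\<bar> * \<Phi> (mv d A (\<delta> m)) + \<Phi> (e m) \<le> (\<Phi> (\<delta> m) - norm1 d (\<delta> m) / 2) + real n * (2 * N)"
        using Phi_le[OF A, where n=n and y="e m"] eb[of m] np unfolding \<Phi>_def
        by (smt (verit) mult_left_mono)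
      also have "\<dots> \<le> (1 - 1 / (2 * real n)) * \<Phi> (\<delta> m) + (1 - (1 - 1 / (2 * real n))) * (4 * (real n)\<^sup>2 * N)"
      proof -
        have "\<Phi> (\<delta> m) / (2 * real n) \<le> norm1 d (\<delta> m) / 2" using le np by (simp add: field_simps)
        moreover have "(1 - (1 - 1 / (2 * real n))) * (4 * (real n)\<^sup>2 * N) = real n * (2 * N)"
          using np by (simp add: field_simps power2_eq_square)
        ultimately show ?thesis by (simp add: algebra_simps)
      qed
      finally show "\<Phi> (\<delta> (Suc m)) \<le> (1 - 1 / (2 * real n)) * \<Phi> (\<delta> m) + (1 - (1 - 1 / (2 * real n))) * (4 * (real n)\<^sup>2 * N)" .
    qed
    moreover have "norm1 d (\<delta> m) \<le> \<Phi> (\<delta> m)" unfolding \<Phi>_def by (rule Phi_ge[OF n(1)])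
    moreover have "4 * (real n)\<^sup>2 * N \<le> 192 * (real \<tau>)\<^sup>2 * N"
    proof -
      have "real n \<le> 4 * real \<tau>" using n by simp
      hence "(real n)\<^sup>2 \<le> (4 * real \<tau>)\<^sup>2" using np by (intro power_mono) auto
      hence "4 * (real n)\<^sup>2 \<le> 192 * (real \<tau>)\<^sup>2"
        using zero_le_power2[of "real \<tau>"] by (simp add: power_mult_distrib, insert zero_le_power2[of "real \<tau>"], linarith)
      thus ?thesis using N0 by (rule mult_right_mono)
    qed
    ultimately show ?thesis by linarith
  qed
  thus ?thesis unfolding \<delta>_def N_def by simp
qed


lemma opnorm_sc: assumes d: "1 \<le> d" and K: "K \<in> stoch_sc d aK" and a: "0 \<le> aK"
  shows "opnorm11 d K = aK"
  unfolding opnorm11_def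
proof (rule cSup_eq_maximum)
  define e0 where "e0 = (\<lambda>i::nat. if i = 0 then (1::real) else 0)"
  have n1: "norm1 d e0 = 1"
  proof -
    have "norm1 d e0 = (\<Sum>i<d. if i = 0 then 1 else 0)" unfolding norm1_def e0_def by (rule sum.cong) auto
    also have "\<dots> = 1" using d by simp
    finally show ?thesis .
  qed
  have "mv d K e0 = (\<lambda>i. if i < d then K i 0 else 0)"
  proof (rule ext)
    fix i
    have "(\<Sum>j<d. K i j * e0 j) = (\<Sum>j<d. if j = 0 then K i j else 0)" unfolding e0_def by (rule sum.cong) auto
    also have "\<dots> = K i 0" using d by simp
    finally show "mv d K e0 i = (if i < d then K i 0 else 0)" unfolding mv_def by simp
  qed
  hence "norm1 d (mv d K e0) = (\<Sum>i<d. \<bar>K i 0\<bar>)" unfolding norm1_def by simp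
  also have "\<dots> = aK" using stoch_sc_col(1)[OF K a] d by simp
  finally show "aK \<in> {norm1 d (mv d K x) |x. norm1 d x = 1}" using n1 by force
next
  fix y assume "y \<in> {norm1 d (mv d K x) |x. norm1 d x = 1}"
  then obtain x where "y = norm1 d (mv d K x)" "norm1 d x = 1" by auto
  thus "y \<le> aK" using mv_sc_norm[OF K a, of x] by simp
qed

lemma C_contract:
  assumes d: "1 \<le> d" and A: "stoch d A" and B: "stoch d B" and K: "K \<in> stoch_sc d aK"
    and a: "0 \<le> aK" "aK \<le> 1" and tm: "tmix d (Cmat d A B K) \<le> enat \<tau>"
    and small: "aK < 1 / (96 * real \<tau>)" and tau: "0 < \<tau>"
    and zs: "(\<Sum>i<d. v i) = 0"
  shows "norm1 d ((mv d A ^^ \<tau>) v) \<le> norm1 d v / 2"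
proof -
  let ?C = "Cmat d A B K"
  have TC: "mv d ?C w = (\<lambda>i. (1 - aK) * mv d A w i + 1 * mv d B (mv d K w) i)" for w
  proof -
    have "mv d ?C w = (\<lambda>i. (1 - aK) * mv d A w i + 1 * mv d (mmul d B K) w i)"
      unfolding Cmat_def opnorm_sc[OF d K a(1)] mv_def
      apply (rule ext)
      apply (simp add: distrib_right sum.distrib)
      apply (simp add: sum_distrib_left mult.assoc)
      done
    thus ?thesis by (simp add: mv_mmul)
  qed
  have nxC: "norm1 d (mv d ?C w) \<le> norm1 d w" for w
  proof -
    have "norm1 d (mv d ?C w) \<le> \<bar>1 - aK\<bar> * norm1 d (mv d A w) + \<bar>1\<bar> * norm1 d (mv d B (mv d K w))"
      unfolding TC by (rule norm1_lin)
    also have "\<dots> \<le> (1 - aK) * norm1 d w + aK * norm1 d w"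
      using mv_stoch_norm[OF A, of w] mv_stoch_norm[OF B, of "mv d K w"] mv_sc_norm[OF K a(1), of w] a
      by (intro add_mono) (auto intro: mult_left_mono)
    finally show ?thesis by (simp add: algebra_simps)
  qed
  have dAC: "norm1 d (\<lambda>i. mv d A w i - mv d ?C w i) \<le> 2 * aK * norm1 d w" for w
  proof -
    have eq: "(\<lambda>i. mv d A w i - mv d ?C w i) = (\<lambda>i. aK * mv d A w i + (-1) * mv d B (mv d K w) i)"
      unfolding TC by (simp add: algebra_simps)
    have "norm1 d (\<lambda>i. mv d A w i - mv d ?C w i) \<le> \<bar>aK\<bar> * norm1 d (mv d A w) + \<bar>-1\<bar> * norm1 d (mv d B (mv d K w))"
      by (subst eq) (rule norm1_lin)
    also have "\<dots> \<le> aK * norm1 d w + aK * norm1 d w"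
      using mv_stoch_norm[OF A, of w] mv_stoch_norm[OF B, of "mv d K w"] mv_sc_norm[OF K a(1), of w] a
      by (intro add_mono) (auto intro: mult_left_mono)
    finally show ?thesis by simp
  qed
  have iter: "norm1 d (\<lambda>i. (mv d A ^^ k) w i - (mv d ?C ^^ k) w i) \<le> 2 * aK * real k * norm1 d w" for k w
  proof (induction k)
    case 0 thus ?case by (simp add: norm1_def)
  next
    case (Suc k)
    let ?a = "(mv d A ^^ k) w" and ?c = "(mv d ?C ^^ k) w"
    have eq: "(\<lambda>i. (mv d A ^^ Suc k) w i - (mv d ?C ^^ Suc k) w i)
        = (\<lambda>i. mv d A (\<lambda>j. ?a j - ?c j) i + (mv d A ?c i - mv d ?C ?c i))"
      by (simp add: mv_diff)
    have "norm1 d (\<lambda>i. (mv d A ^^ Suc k) w i - (mv d ?C ^^ Suc k) w i)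
        \<le> norm1 d (mv d A (\<lambda>j. ?a j - ?c j)) + norm1 d (\<lambda>i. mv d A ?c i - mv d ?C ?c i)"
      by (subst eq) (rule norm1_add)
    also have "\<dots> \<le> 2 * aK * real k * norm1 d w + 2 * aK * norm1 d w"
    proof (rule add_mono)
      show "norm1 d (mv d A (\<lambda>j. ?a j - ?c j)) \<le> 2 * aK * real k * norm1 d w"
        using mv_stoch_norm[OF A] Suc order_trans by blast
      have "norm1 d ?c \<le> norm1 d w" by (rule Tk_nonexp[OF nxC])
      hence "2 * aK * norm1 d ?c \<le> 2 * aK * norm1 d w" using a by (simp add: mult_left_mono)
      thus "norm1 d (\<lambda>i. mv d A ?c i - mv d ?C ?c i) \<le> 2 * aK * norm1 d w"
        using dAC[of ?c] by linarith
    qed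
    finally show ?case by (simp add: algebra_simps)
  qed
  have c4: "norm1 d ((mv d ?C ^^ \<tau>) v) \<le> norm1 d v / 4" by (rule mix_contract[OF nxC tm zs])
  have eq: "(mv d A ^^ \<tau>) v = (\<lambda>i. (mv d ?C ^^ \<tau>) v i + ((mv d A ^^ \<tau>) v i - (mv d ?C ^^ \<tau>) v i))"
    by simp
  have "norm1 d ((mv d A ^^ \<tau>) v) \<le> norm1 d ((mv d ?C ^^ \<tau>) v) + norm1 d (\<lambda>i. (mv d A ^^ \<tau>) v i - (mv d ?C ^^ \<tau>) v i)"
    by (subst eq) (rule norm1_add)
  also have "\<dots> \<le> norm1 d v / 4 + 2 * aK * real \<tau> * norm1 d v" using c4 iter[of \<tau> v] by linarith
  also have "\<dots> \<le> norm1 d v / 2"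
  proof -
    have "aK * real \<tau> \<le> 1 / 96" using small tau by (simp add: field_simps)
    hence "2 * aK * real \<tau> * norm1 d v \<le> (1/48) * norm1 d v"
      using norm1_nonneg[of d v] by (intro mult_right_mono) auto
    thus ?thesis using norm1_nonneg[of d v] by linarith
  qed
  finally show ?thesis .
qed


theorem lemma9:
  "\<exists>C>0. \<forall>(d::nat) (H::nat) (T::nat) A B (alb::real) (aub::real) x1 \<gamma> w c (L::real) (\<tau>::nat).
     ( 1 \<le> d \<and> 0 < \<tau> \<and> stoch d A \<and> stoch d B
     \<and> 0 \<le> alb \<and> alb \<le> aub \<and> aub \<le> 1 \<and> x1 \<in> simplex d
     \<and> (\<forall>t\<ge>1. 0 \<le> \<gamma> t \<and> \<gamma> t \<le> 1 \<and> w t \<in> simplex d)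
     \<and> 0 \<le> L
     \<and> (\<forall>t\<ge>1. \<forall>x\<in>simplex d. \<forall>x'\<in>simplex d. \<forall>u\<in>Iset d alb aub. \<forall>u'\<in>Iset d alb aub.
           \<forall>\<theta>::real. 0 \<le> \<theta> \<and> \<theta> \<le> 1 \<longrightarrow>
             c t (\<lambda>i. \<theta> * x i + (1 - \<theta>) * x' i) (\<lambda>i. \<theta> * u i + (1 - \<theta>) * u' i)
               \<le> \<theta> * c t x u + (1 - \<theta>) * c t x' u')
     \<and> (\<forall>t\<ge>1. \<forall>x\<in>simplex d. \<forall>x'\<in>simplex d. \<forall>u\<in>Iset d alb aub. \<forall>u'\<in>Iset d alb aub.
           \<bar>c t x u - c t x' u'\<bar> \<le> L * (norm1 d (\<lambda>i. x i - x' i) + norm1 d (\<lambda>i. u i - u' i)))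
     \<and> Ksim d A B alb aub \<tau> \<noteq> {} )
   \<longrightarrow> (\<forall>t\<in>{1..T}. \<forall>p M p' M'.
          (p, M) \<in> domX d H (a0 d A \<tau> alb aub) aub \<longrightarrow> (p', M') \<in> domX d H (a0 d A \<tau> alb aub) aub \<longrightarrow>
          \<bar>loss d H A B \<gamma> x1 w c t p M - loss d H A B \<gamma> x1 w c t p' M'\<bar>
            \<le> C * L * (real \<tau>)\<^sup>2 * normdH d H (\<lambda>i. p i - p' i) (\<lambda>h i j. M h i j - M' h i j))"
proof (rule exI[where x=193], intro conjI allI impI ballI)
  show "(0::real) < 193" by simp
next
  fix d H T :: nat and A B :: "nat \<Rightarrow> nat \<Rightarrow> real" and alb aub :: real and x1 :: "nat \<Rightarrow> real"
    and \<gamma> :: "nat \<Rightarrow> real" and w :: "nat \<Rightarrow> nat \<Rightarrow> real"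
    and c :: "nat \<Rightarrow> (nat \<Rightarrow> real) \<Rightarrow> (nat \<Rightarrow> real) \<Rightarrow> real" and L :: real and \<tau> t :: nat
    and p p' :: "nat \<Rightarrow> real" and M M' :: "nat \<Rightarrow> nat \<Rightarrow> nat \<Rightarrow> real"
  assume hyp: "1 \<le> d \<and> 0 < \<tau> \<and> stoch d A \<and> stoch d B
     \<and> 0 \<le> alb \<and> alb \<le> aub \<and> aub \<le> 1 \<and> x1 \<in> simplex d
     \<and> (\<forall>t\<ge>1. 0 \<le> \<gamma> t \<and> \<gamma> t \<le> 1 \<and> w t \<in> simplex d)
     \<and> 0 \<le> L
     \<and> (\<forall>t\<ge>1. \<forall>x\<in>simplex d. \<forall>x'\<in>simplex d. \<forall>u\<in>Iset d alb aub. \<forall>u'\<in>Iset d alb aub.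
           \<forall>\<theta>::real. 0 \<le> \<theta> \<and> \<theta> \<le> 1 \<longrightarrow>
             c t (\<lambda>i. \<theta> * x i + (1 - \<theta>) * x' i) (\<lambda>i. \<theta> * u i + (1 - \<theta>) * u' i)
               \<le> \<theta> * c t x u + (1 - \<theta>) * c t x' u')
     \<and> (\<forall>t\<ge>1. \<forall>x\<in>simplex d. \<forall>x'\<in>simplex d. \<forall>u\<in>Iset d alb aub. \<forall>u'\<in>Iset d alb aub.
           \<bar>c t x u - c t x' u'\<bar> \<le> L * (norm1 d (\<lambda>i. x i - x' i) + norm1 d (\<lambda>i. u i - u' i)))
     \<and> Ksim d A B alb aub \<tau> \<noteq> {}"
    and tT: "t \<in> {1..T}"
    and D1: "(p, M) \<in> domX d H (a0 d A \<tau> alb aub) aub"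
    and D2: "(p', M') \<in> domX d H (a0 d A \<tau> alb aub) aub"
  have d: "1 \<le> d" and tau: "0 < \<tau>" and A: "stoch d A" and B: "stoch d B"
    and alb: "0 \<le> alb" "alb \<le> aub" "aub \<le> 1" and x1: "x1 \<in> simplex d"
    and gw: "\<forall>t\<ge>1. 0 \<le> \<gamma> t \<and> \<gamma> t \<le> 1 \<and> w t \<in> simplex d" and L: "0 \<le> L"
    and lip: "\<forall>t\<ge>1. \<forall>x\<in>simplex d. \<forall>x'\<in>simplex d. \<forall>u\<in>Iset d alb aub. \<forall>u'\<in>Iset d alb aub.
           \<bar>c t x u - c t x' u'\<bar> \<le> L * (norm1 d (\<lambda>i. x i - x' i) + norm1 d (\<lambda>i. u i - u' i))"
    and Kne: "Ksim d A B alb aub \<tau> \<noteq> {}"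
    using hyp by auto
  define a00 where "a00 = a0 d A \<tau> alb aub"
  have a00lb: "alb \<le> a00" unfolding a00_def a0_def by simp
  obtain a where a: "a \<in> {a00..aub}" "p \<in> simplex_sc d a" "\<forall>h\<in>{1..H}. M h \<in> stoch_sc d a"
    using D1 unfolding domX_def a00_def by auto
  obtain a' where a': "a' \<in> {a00..aub}" "p' \<in> simplex_sc d a'" "\<forall>h\<in>{1..H}. M' h \<in> stoch_sc d a'"
    using D2 unfolding domX_def a00_def by auto
  have g: "gok \<gamma>" unfolding gok_def using gw by auto
  have w: "wok d x1 w" unfolding wok_def using gw x1 by auto
  have pm: "pmok d H a p M" unfolding pmok_def using a a00lb alb by auto
  have pm': "pmok d H a' p' M'" unfolding pmok_def using a' a00lb alb by auto
  have alt: "1 / (96 * real \<tau>) \<le> a \<or> (\<exists>n. 1 \<le> n \<and> n \<le> 4 * \<tau> \<and>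
        (\<forall>v. (\<Sum>i<d. v i) = 0 \<longrightarrow> norm1 d ((mv d A ^^ n) v) \<le> norm1 d v / 2))"
  proof (cases "1 / (96 * real \<tau>) \<le> a")
    case True thus ?thesis by simp
  next
    case False
    hence lt: "a < 1 / (96 * real \<tau>)" by simp
    show ?thesis
    proof (cases "tmix d A > enat (4 * \<tau>)")
      case True
      hence "a00 = max alb (min aub (1 / (96 * real \<tau>)))" unfolding a00_def a0_def by simp
      hence "aub < 1 / (96 * real \<tau>)" using a(1) lt by (auto simp: min_def split: if_splits)
      obtain K where K: "K \<in> Ksim d A B alb aub \<tau>" using Kne by auto
      then obtain aK where aK: "aK \<in> {alb..aub}" "K \<in> stoch_sc d aK" "tmix d (Cmat d A B K) \<le> enat \<tau>"
        unfolding Ksim_def by auto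
      have "\<forall>v. (\<Sum>i<d. v i) = 0 \<longrightarrow> norm1 d ((mv d A ^^ \<tau>) v) \<le> norm1 d v / 2"
      proof (intro allI impI)
        fix v :: "nat \<Rightarrow> real" assume zs: "(\<Sum>i<d. v i) = 0"
        show "norm1 d ((mv d A ^^ \<tau>) v) \<le> norm1 d v / 2"
          by (rule C_contract[OF d A B aK(2) _ _ aK(3) _ tau zs])
             (use aK(1) alb \<open>aub < 1 / (96 * real \<tau>)\<close> in auto)
      qed
      thus ?thesis using tau by (intro disjI2 exI[where x=\<tau>]) auto
    next
      case False
      hence tm: "tmix d A \<le> enat (4 * \<tau>)" by (simp add: not_less)
      have "\<forall>v. (\<Sum>i<d. v i) = 0 \<longrightarrow> norm1 d ((mv d A ^^ (4 * \<tau>)) v) \<le> norm1 d v / 2"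
      proof (intro allI impI)
        fix v :: "nat \<Rightarrow> real" assume zs: "(\<Sum>i<d. v i) = 0"
        have "norm1 d ((mv d A ^^ (4 * \<tau>)) v) \<le> norm1 d v / 4"
          by (rule mix_contract[OF mv_stoch_norm[OF A] tm zs])
        thus "norm1 d ((mv d A ^^ (4 * \<tau>)) v) \<le> norm1 d v / 2" using norm1_nonneg[of d v] by linarith
      qed
      thus ?thesis using tau by (intro disjI2 exI[where x="4 * \<tau>"]) auto
    qed
  qed
  define N where "N = normdH d H (\<lambda>i. p i - p' i) (\<lambda>h i j. M h i j - M' h i j)"
  have N0: "0 \<le> N" unfolding N_def by (rule normdH_nonneg)
  have t1: "1 \<le> t" using tT by simp
  let ?x = "xtraj d H A B \<gamma> x1 w p M (t - 1)" and ?x' = "xtraj d H A B \<gamma> x1 w p' M' (t - 1)"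
  let ?u = "uc d H \<gamma> x1 w p M t" and ?u' = "uc d H \<gamma> x1 w p' M' t"
  have xb: "norm1 d (\<lambda>i. ?x i - ?x' i) \<le> 192 * (real \<tau>)\<^sup>2 * N"
    unfolding N_def by (rule traj_bound[OF g w pm pm' A B tau alt])
  have ub: "norm1 d (\<lambda>i. ?u i - ?u' i) \<le> N"
    unfolding N_def by (rule du_le[OF g w pm pm'])
  have xs: "?x \<in> simplex d" "?x' \<in> simplex d" using x_simplex[OF g w pm A B] x_simplex[OF g w pm' A B] by auto
  have us: "?u \<in> Iset d alb aub" "?u' \<in> Iset d alb aub"
    using u_Iset[OF g w pm] u_Iset[OF g w pm'] a a' a00lb by auto
  have "\<bar>loss d H A B \<gamma> x1 w c t p M - loss d H A B \<gamma> x1 w c t p' M'\<bar>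
      \<le> L * (norm1 d (\<lambda>i. ?x i - ?x' i) + norm1 d (\<lambda>i. ?u i - ?u' i))"
    unfolding loss_def using lip t1 xs us by blast
  also have "\<dots> \<le> L * (192 * (real \<tau>)\<^sup>2 * N + (real \<tau>)\<^sup>2 * N)"
  proof -
    have "1 \<le> (real \<tau>)\<^sup>2" using tau by simp
    hence "N \<le> (real \<tau>)\<^sup>2 * N" using N0 by (metis mult_1 mult_right_mono)
    hence "norm1 d (\<lambda>i. ?x i - ?x' i) + norm1 d (\<lambda>i. ?u i - ?u' i) \<le> 192 * (real \<tau>)\<^sup>2 * N + (real \<tau>)\<^sup>2 * N"
      using xb ub by linarith
    thus ?thesis using L by (rule mult_left_mono)
  qed
  also have "\<dots> = 193 * L * (real \<tau>)\<^sup>2 * N" by (simp add: algebra_simps)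
  finally show "\<bar>loss d H A B \<gamma> x1 w c t p M - loss d H A B \<gamma> x1 w c t p' M'\<bar>
      \<le> 193 * L * (real \<tau>)\<^sup>2 * normdH d H (\<lambda>i. p i - p' i) (\<lambda>h i j. M h i j - M' h i j)"
    unfolding N_def .
qed

end
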